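(* Fix a history $H$ with EIP-1559 burning fee $r\ge0$ per unit of size, and consider the Single TFM with split parameter $z\in[0,1]$ and all transactions of the same size $s>0$. Assume users cannot overbid ($c_t\le v_t$), the burning fee is not excessively low (the total size of transactions $t$ in the mempool with $v_t\ge r$ does not exceed the block capacity), and all includers and the block producer follow the indicated allocation rules and add no fake transactions. Then for every user with value $v_t$, the bid $b_t=c_t=\min\{v_t,\ r+\mu^{Cost}_{BP}\}$ is a dominant strategy, irrespective of the user's beliefs.
   Context: Model: in one slot there are users, $m$ includers with distinct orders $1,\dots,m$ (order $1$ best), and one block producer. Each user has a transaction of size $s$ and private value $v_t$ per unit of size. Includers choose inclusion lists (at most $c_{Incl}$ transactions each); the block producer, seeing them, builds a block (at most $c_{block}$ transactions). Each transaction in the block pays burning fee $rs$. Block producer cost $\mu^{Cost}_{BP}\ge0$ and includer cost $\mu^{Cost}_{CM}\ge0$ per unit of size per included user transaction. A user whose transaction is in the block has utility $(v_t-r)s$ minus fees paid; otherwise $0$. Single TFM: the bid is a single number $c_t$. Block producer fee $=\max\{\min\{\mu^{Cost}_{BP}s,\ c_ts-rs\}+\max\{c_ts-rs-\mu^{Cost}_{BP}s,0\}(1-z),\ 0\}$, paid when $t$ is in the block. Committee fee $=\max\{c_ts-rs-\mu^{Cost}_{BP}s,0\}\cdot z$, paid to the smallest-order includer listing $t$, only if $t$ is in the block. Indicated allocation rules. Block producer: among transactions with $c_t\ge r+\mu^{Cost}_{BP}$, include those with highest block producer fee (deterministic tie-breaking) until full. Includer of order $j$: compute the set $S$ the block producer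 would include; discard those with committee fee below $\mu^{Cost}_{CM}s$; sort the rest by committee fee decreasingly (deterministic tie-breaking); includer $j$ takes positions $(j-1)c_{Incl}+1,\dots,jc_{Incl}$. *)

theory Defs
  imports Main "HOL.Real"
begin

text \<open>Single TFM, one slot. All transactions have size s. Users form a finite set U
(the mempool); user t bids c t (per unit of size) and has value v t.\<close>

definition bp_fee :: "real \<Rightarrow> real \<Rightarrow> real \<Rightarrow> real \<Rightarrow> real \<Rightarrow> real" where
  "bp_fee r s muBP z ct =
     max (min (muBP * s) (ct * s - r * s) + max (ct * s - r * s - muBP * s) 0 * (1 - z)) 0"

definition cm_fee :: "real \<Rightarrow> real \<Rightarrow> real \<Rightarrow> real \<Rightarrow> real \<Rightarrow> real" where
  "cm_fee r s muBP z ct = max (ct * s - r * s - muBP * s) 0 * z"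

definition precedes :: "('u \<Rightarrow> real) \<Rightarrow> ('u \<Rightarrow> nat) \<Rightarrow> 'u \<Rightarrow> 'u \<Rightarrow> bool" where
  "precedes f tb t' t \<longleftrightarrow> f t' > f t \<or> (f t' = f t \<and> tb t' < tb t)"

text \<open>Indicated block producer rule: among transactions with c t \<ge> r + muBP, take those with
highest block producer fee until cblock transactions are included.\<close>
definition bp_eligible :: "'u set \<Rightarrow> real \<Rightarrow> real \<Rightarrow> ('u \<Rightarrow> real) \<Rightarrow> 'u set" where
  "bp_eligible U r muBP c = {t \<in> U. c t \<ge> r + muBP}"

definition block ::
  "'u set \<Rightarrow> real \<Rightarrow> real \<Rightarrow> real \<Rightarrow> real \<Rightarrow> nat \<Rightarrow> ('u \<Rightarrow> nat) \<Rightarrow> ('u \<Rightarrow> real) \<Rightarrow> 'u set" where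
  "block U r s muBP z cblock tbBP c =
     (let E = bp_eligible U r muBP c;
          f = (\<lambda>u. bp_fee r s muBP z (c u))
      in {t \<in> E. card {t' \<in> E. precedes f tbBP t' t} < cblock})"

text \<open>Indicated includer rule: includer j (1 \<le> j \<le> m) computes the block S, discards
transactions with committee fee below muCM * s, sorts the rest decreasingly by committee fee
and takes positions (j-1)*cIncl+1 .. j*cIncl.\<close>
definition includer_list ::
  "'u set \<Rightarrow> real \<Rightarrow> real \<Rightarrow> real \<Rightarrow> real \<Rightarrow> real \<Rightarrow> nat \<Rightarrow> nat \<Rightarrow> ('u \<Rightarrow> nat) \<Rightarrow> ('u \<Rightarrow> nat)
    \<Rightarrow> ('u \<Rightarrow> real) \<Rightarrow> nat \<Rightarrow> 'u set" where
  "includer_list U r s muBP muCM z cblock cIncl tbBP tbCM c j =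
     (let S = block U r s muBP z cblock tbBP c;
          g = (\<lambda>u. cm_fee r s muBP z (c u));
          D = {t \<in> S. g t \<ge> muCM * s}
      in {t \<in> D. (j - 1) * cIncl \<le> card {t' \<in> D. precedes g tbCM t' t}
                 \<and> card {t' \<in> D. precedes g tbCM t' t} < j * cIncl})"

definition listed ::
  "'u set \<Rightarrow> real \<Rightarrow> real \<Rightarrow> real \<Rightarrow> real \<Rightarrow> real \<Rightarrow> nat \<Rightarrow> nat \<Rightarrow> nat \<Rightarrow> ('u \<Rightarrow> nat) \<Rightarrow> ('u \<Rightarrow> nat)
    \<Rightarrow> ('u \<Rightarrow> real) \<Rightarrow> 'u \<Rightarrow> bool" where
  "listed U r s muBP muCM z m cblock cIncl tbBP tbCM c t \<longleftrightarrow>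
     (\<exists>j\<in>{1..m}. t \<in> includer_list U r s muBP muCM z cblock cIncl tbBP tbCM c j)"

definition utility ::
  "'u set \<Rightarrow> real \<Rightarrow> real \<Rightarrow> real \<Rightarrow> real \<Rightarrow> real \<Rightarrow> nat \<Rightarrow> nat \<Rightarrow> nat \<Rightarrow> ('u \<Rightarrow> nat) \<Rightarrow> ('u \<Rightarrow> nat)
    \<Rightarrow> ('u \<Rightarrow> real) \<Rightarrow> ('u \<Rightarrow> real) \<Rightarrow> 'u \<Rightarrow> real" where
  "utility U r s muBP muCM z m cblock cIncl tbBP tbCM v c t =
     (if t \<in> block U r s muBP z cblock tbBP c
      then (v t - r) * s - bp_fee r s muBP z (c t)
           - (if listed U r s muBP muCM z m cblock cIncl tbBP tbCM c t
              then cm_fee r s muBP z (c t) else 0)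
      else 0)"

end

theory Submission
  imports Defs
begin

lemma in_block:
  fixes c' v :: "'u \<Rightarrow> real"
  assumes "finite U" "t \<in> U" "muBP \<ge> 0" "s > 0"
    and "\<forall>u\<in>U. c' u \<le> v u" and "c' t \<ge> r + muBP"
    and "real (card {u \<in> U. v u \<ge> r}) * s \<le> real cblock * s"
  shows "t \<in> block U r s muBP z cblock tbBP c'"
proof -
  let ?E = "bp_eligible U r muBP c'"
  let ?f = "\<lambda>u. bp_fee r s muBP z (c' u)"
  have tE: "t \<in> ?E" using assms unfolding bp_eligible_def by auto
  have fin: "finite ?E" using assms(1) unfolding bp_eligible_def by auto
  have sub: "?E \<subseteq> {u \<in> U. v u \<ge> r}" using assms(3,5) unfolding bp_eligible_def by force
  have "card ?E \<le> card {u \<in> U. v u \<ge> r}"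
    by (rule card_mono) (use assms(1) sub in auto)
  moreover have "card {u \<in> U. v u \<ge> r} \<le> cblock" using assms(4,7) by simp
  moreover have "card {t' \<in> ?E. precedes ?f tbBP t' t} < card ?E"
    by (rule psubset_card_mono) (use fin tE in \<open>auto simp: precedes_def\<close>)
  ultimately have "card {t' \<in> ?E. precedes ?f tbBP t' t} < cblock" by linarith
  then show ?thesis using tE unfolding block_def Let_def by simp
qed

lemma not_block:
  assumes "c' t < r + muBP"
  shows "t \<notin> block U r s muBP z cblock tbBP c'"
  using assms unfolding block_def Let_def bp_eligible_def by auto

theorem mainTheorem3:
  fixes U :: "'u set" and r s muBP muCM z :: real and m cblock cIncl :: nat
    and tbBP tbCM :: "'u \<Rightarrow> nat" and v c :: "'u \<Rightarrow> real" and t :: 'u and b' :: real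
  assumes "finite U" and "t \<in> U"
    and "r \<ge> 0" and "s > 0" and "0 \<le> z" and "z \<le> 1"
    and "muBP \<ge> 0" and "muCM \<ge> 0"
    and "inj_on tbBP U" and "inj_on tbCM U"
    and no_overbid: "\<forall>u\<in>U. c u \<le> v u"
    and "b' \<le> v t"
    and capacity: "real (card {u \<in> U. v u \<ge> r}) * s \<le> real cblock * s"
  shows "utility U r s muBP muCM z m cblock cIncl tbBP tbCM v (c(t := min (v t) (r + muBP))) t
         \<ge> utility U r s muBP muCM z m cblock cIncl tbBP tbCM v (c(t := b')) t"
proof (cases "v t < r + muBP")
  case True
  have "t \<notin> block U r s muBP z cblock tbBP (c(t := b'))"
    by (rule not_block) (use True assms in auto)
  moreover have "t \<notin> block U r s muBP z cblock tbBP (c(t := min (v t) (r + muBP)))"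
    by (rule not_block) (use True assms in auto)
  ultimately show ?thesis unfolding utility_def by simp
next
  case False
  let ?c1 = "c(t := min (v t) (r + muBP))"
  have b1: "t \<in> block U r s muBP z cblock tbBP ?c1"
    by (rule in_block[where v=v]) (use False assms in auto)
  have u1: "utility U r s muBP muCM z m cblock cIncl tbBP tbCM v ?c1 t = (v t - r) * s - muBP * s"
  proof -
    have m: "min (v t) (r + muBP) = r + muBP" using False by simp
    have "bp_fee r s muBP z (r + muBP) = muBP * s" unfolding bp_fee_def using assms(4,7)
      by (simp add: algebra_simps)
    moreover have "cm_fee r s muBP z (r + muBP) = 0" unfolding cm_fee_def by (simp add: algebra_simps)
    ultimately show ?thesis using b1 m unfolding utility_def by simp
  qed
  have nn: "(v t - r) * s - muBP * s \<ge> 0" using False assms(4)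
    by (metis diff_ge_0_iff_ge left_diff_distrib' less_eq_real_def linorder_not_le mult_right_mono add.commute le_diff_eq)
  show ?thesis
  proof (cases "b' < r + muBP")
    case True
    have "t \<notin> block U r s muBP z cblock tbBP (c(t := b'))"
      by (rule not_block) (use True in auto)
    then show ?thesis using u1 nn unfolding utility_def by simp
  next
    case F2: False
    let ?x = "(b' - r - muBP) * s"
    have x0: "?x \<ge> 0" using F2 assms(4) by simp
    have bf: "bp_fee r s muBP z b' = muBP * s + ?x * (1 - z)"
    proof -
      have e: "b' * s - r * s - muBP * s = ?x" by (simp add: algebra_simps)
      have mn: "min (muBP * s) (b' * s - r * s) = muBP * s" using x0 e by (simp add: min_def)
      have mx: "max ?x 0 = ?x" using x0 by simp
      have "muBP * s + ?x * (1 - z) \<ge> 0" using x0 assms(4,6,7) by simp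
      then show ?thesis unfolding bp_fee_def e mn mx by simp
    qed
    have cf: "cm_fee r s muBP z b' = ?x * z"
    proof -
      have e: "b' * s - r * s - muBP * s = ?x" by (simp add: algebra_simps)
      show ?thesis unfolding cm_fee_def e using x0 by simp
    qed
    have "?x * (1 - z) \<ge> 0" "?x * z \<ge> 0" using x0 assms(5,6) by auto
    then have "utility U r s muBP muCM z m cblock cIncl tbBP tbCM v (c(t := b')) t
        \<le> (v t - r) * s - muBP * s"
      unfolding utility_def using bf cf nn by (auto simp: algebra_simps)
    then show ?thesis using u1 by simp
  qed
qed

end
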